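(* Let $k\neq 0$, $a$, $b$ be real numbers and let $\{S^{(a,b)}_{k,n}\}_{n\ge 0}$ be the generalized $k$-FL sequence. (a) For an odd integer $n\ge 1$, the matrix $A^{(k,a,b)}_n$ is invertible if and only if $S^{(a,b)}_{k,n+1}-S^{(a,b)}_{k,n}\neq -bk+2b-a$. (b) For an even integer $n\ge 2$, the matrix $B^{(k,a,b)}_n$ is invertible if and only if $S^{(a,b)}_{k,n+1}-S^{(a,b)}_{k,n}\neq bk-2b+a$ and $S^{(a,b)}_{k,n+1}+S^{(a,b)}_{k,n}\neq bk+2b+a$.
   Context: For real numbers $k,a,b$, the generalized $k$-FL sequence $\{S^{(a,b)}_{k,n}\}_{n\ge0}$ is defined by $S^{(a,b)}_{k,0}=2b$, $S^{(a,b)}_{k,1}=bk+a$, and $S^{(a,b)}_{k,n}=k\,S^{(a,b)}_{k,n-1}+S^{(a,b)}_{k,n-2}$ for $n\ge2$. For $n\ge1$, $A^{(k,a,b)}_n$ is the $n\times n$ real skew circulant matrix with first row $(S^{(a,b)}_{k,1},\dots,S^{(a,b)}_{k,n})$, i.e. its $(i,j)$ entry is $S^{(a,b)}_{k,j-i+1}$ if $j\ge i$ and $-S^{(a,b)}_{k,n+j-i+1}$ if $j<i$. $B^{(k,a,b)}_n$ is the $n\times n$ circulant matrix whose $(i,j)$ entry is $S^{(a,b)}_{k,j-i+1}$ if $j\ge i$ and $S^{(a,b)}_{k,n+j-i+1}$ if $j<i$. *)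

theory Defs
  imports "Jordan_Normal_Form.Matrix"
begin

fun FL :: "real \<Rightarrow> real \<Rightarrow> real \<Rightarrow> nat \<Rightarrow> real" where
  "FL k a b 0 = 2 * b"
| "FL k a b (Suc 0) = b * k + a"
| "FL k a b (Suc (Suc n)) = k * FL k a b (Suc n) + FL k a b n"

definition skewcircA :: "real \<Rightarrow> real \<Rightarrow> real \<Rightarrow> nat \<Rightarrow> real mat" where
  "skewcircA k a b n = mat n n (\<lambda>(i, j).
     if i \<le> j then FL k a b (j - i + 1) else - FL k a b (n + j - i + 1))"

definition circB :: "real \<Rightarrow> real \<Rightarrow> real \<Rightarrow> nat \<Rightarrow> real mat" where
  "circB k a b n = mat n n (\<lambda>(i, j).
     if i \<le> j then FL k a b (j - i + 1) else FL k a b (n + j - i + 1))"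

end

theory Submission
  imports Defs "Jordan_Normal_Form.Determinant"
begin

definition Dm :: "real \<Rightarrow> nat \<Rightarrow> real \<Rightarrow> real mat" where
  "Dm e n r = mat n n (\<lambda>(i,j). (if j = Suc i then 1 else if i = n - 1 \<and> j = 0 then e else 0)
      - (if i = j then r else 0))"

lemma Dm_carrier[simp]: "Dm e n r \<in> carrier_mat n n" by (simp add: Dm_def)

lemma mult_Dm:
  assumes M: "M \<in> carrier_mat n n" and i: "i < n" and j: "j < n"
  shows "(M * Dm e n r) $$ (i,j) = (if 0 < j then M $$ (i, j - 1) else e * M $$ (i, n - 1)) - r * M $$ (i,j)"
proof -
  have "(M * Dm e n r) $$ (i,j) = (\<Sum>l<n. M $$ (i,l) * ((if j = Suc l then 1 else if l = n - 1 \<and> j = 0 then e else 0)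
      - (if l = j then r else 0)))"
    using M i j by (simp add: Dm_def scalar_prod_def lessThan_atLeast0)
  also have "\<dots> = (\<Sum>l<n. if l = j - 1 \<and> 0 < j then M $$ (i,l) else 0)
      + (\<Sum>l<n. if l = n - 1 \<and> j = 0 then e * M $$ (i,l) else 0) - (\<Sum>l<n. if l = j then r * M $$ (i,l) else 0)"
    unfolding sum.distrib[symmetric] sum_subtractf[symmetric]
    by (rule sum.cong) (auto simp: algebra_simps)
  also have "\<dots> = (if 0 < j then M $$ (i, j - 1) else e * M $$ (i, n - 1)) - r * M $$ (i,j)"
    using i j by (auto simp: sum.delta' )
  finally show ?thesis .
qed

definition Qm :: "real \<Rightarrow> nat \<Rightarrow> real \<Rightarrow> real mat" where
  "Qm e n r = mat n n (\<lambda>(i,j). if i \<le> j then r ^ (n - 1 - (j - i)) else e * r ^ (i - j - 1))"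

lemma Qm_carrier[simp]: "Qm e n r \<in> carrier_mat n n" by (simp add: Qm_def)

lemma Qm_Dm: "Qm e n r * Dm e n r = (e - r ^ n) \<cdot>\<^sub>m 1\<^sub>m n"
proof (rule eq_matI)
  fix i j assume i: "i < dim_row ((e - r ^ n) \<cdot>\<^sub>m 1\<^sub>m n)" and j: "j < dim_col ((e - r ^ n) \<cdot>\<^sub>m 1\<^sub>m n)"
  hence i: "i < n" and j: "j < n" by auto
  show "(Qm e n r * Dm e n r) $$ (i, j) = ((e - r ^ n) \<cdot>\<^sub>m 1\<^sub>m n) $$ (i, j)"
  proof -
  note m = mult_Dm[OF Qm_carrier i j]
  show ?thesis
  proof (cases "0 < j")
    case True
    show ?thesis
    proof (cases "i < j")
      case True
      have e1: "n - 1 - (j - 1 - i) = Suc (n - 1 - (j - i))" using True \<open>0<j\<close> j by linarith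
      have "Qm e n r $$ (i, j - 1) = r ^ (n - 1 - (j - 1 - i))" using True i j by (simp add: Qm_def)
      also have "\<dots> = r * r ^ (n - 1 - (j - i))" unfolding e1 by simp
      finally have q1: "Qm e n r $$ (i, j - 1) = r * r ^ (n - 1 - (j - i))" .
      have q2: "Qm e n r $$ (i, j) = r ^ (n - 1 - (j - i))" using True i j by (simp add: Qm_def)
      show ?thesis using True \<open>0<j\<close> i j unfolding m q1 q2 by simp
    next
      case False
      show ?thesis
      proof (cases "i = j")
        case True
        have rn: "r * r ^ (n - 1) = r ^ n" using i by (metis Suc_pred' gr_implies_not0 not_gr_zero power_Suc)
        have q1: "Qm e n r $$ (i, j - 1) = e" using True \<open>0<j\<close> i j by (simp add: Qm_def)
        have q2: "Qm e n r $$ (i, j) = r ^ (n - 1)" using True i j by (simp add: Qm_def)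
        show ?thesis using True i j unfolding m q1 q2 rn by (simp add: \<open>0<j\<close>)
      next
        case False
        have e1: "i - (j - 1) - 1 = Suc (i - j - 1)" using False \<open>\<not> i < j\<close> \<open>0<j\<close> by linarith
        have "Qm e n r $$ (i, j - 1) = e * r ^ (i - (j - 1) - 1)" using False \<open>\<not> i < j\<close> \<open>0<j\<close> i j by (simp add: Qm_def)
        also have "\<dots> = r * (e * r ^ (i - j - 1))" unfolding e1 by simp
        finally have q1: "Qm e n r $$ (i, j - 1) = r * (e * r ^ (i - j - 1))" .
        have q2: "Qm e n r $$ (i, j) = e * r ^ (i - j - 1)" using False \<open>\<not> i < j\<close> i j by (simp add: Qm_def)
        show ?thesis using False i j unfolding m q1 q2 by (simp add: \<open>0<j\<close>)
      qed
    qed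
  next
    case False
    hence j0: "j = 0" by simp
    show ?thesis
    proof (cases "i = 0")
      case True
      have rn: "r * r ^ (n - 1) = r ^ n" using i by (metis Suc_pred' gr_implies_not0 not_gr_zero power_Suc)
      have q1: "Qm e n r $$ (i, n - 1) = 1" using True i by (simp add: Qm_def)
      have q2: "Qm e n r $$ (i, j) = r ^ (n - 1)" using True j0 i by (simp add: Qm_def)
      show ?thesis using True j0 i unfolding m q1 q2 rn by simp
    next
      case False
      have e1: "n - 1 - (n - 1 - i) = Suc (i - 1)" using False i by linarith
      have "i \<le> n - 1" using i by linarith
      hence "Qm e n r $$ (i, n - 1) = r ^ (n - 1 - (n - 1 - i))" using i by (simp add: Qm_def)
      also have "\<dots> = r * r ^ (i - 1)" unfolding e1 by simp
      finally have q1: "Qm e n r $$ (i, n - 1) = r * r ^ (i - 1)" .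
      have q2: "Qm e n r $$ (i, j) = e * r ^ (i - 1)" using False j0 i by (simp add: Qm_def)
      show ?thesis using False j0 i unfolding m q1 q2 by simp
    qed
  qed
  qed
qed (auto simp: Qm_def Dm_def)

lemma Qm_corner: "0 < n \<Longrightarrow> Qm e n r $$ (0, n - 1) = 1"
  by (simp add: Qm_def)

lemma det_Dm_nz: "r ^ n \<noteq> e \<Longrightarrow> det (Dm e n r) \<noteq> 0"
proof -
  assume "r ^ n \<noteq> e"
  have "det (Qm e n r) * det (Dm e n r) = (e - r ^ n) ^ n"
    using det_mult[of "Qm e n r" n "Dm e n r"] by (simp add: Qm_Dm)
  thus ?thesis using \<open>r ^ n \<noteq> e\<close> by auto
qed

lemma det_Dm_z: assumes "0 < n" "r ^ n = e" shows "det (Dm e n r) = 0"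
proof (rule ccontr)
  assume d: "det (Dm e n r) \<noteq> 0"
  let ?D = "Dm e n r" and ?Q = "Qm e n r"
  have "?Q * (?D * adj_mat ?D) = (?Q * ?D) * adj_mat ?D"
    using adj_mat(1)[OF Dm_carrier] by (simp add: assoc_mult_mat[symmetric, of _ n n _ n _ n])
  also have "?Q * ?D = 0\<^sub>m n n" using assms by (simp add: Qm_Dm, intro eq_matI, auto)
  also have "0\<^sub>m n n * adj_mat ?D = 0\<^sub>m n n" using adj_mat(1)[OF Dm_carrier] by (simp add: left_mult_zero_mat)
  finally have "?Q * (det ?D \<cdot>\<^sub>m 1\<^sub>m n) = 0\<^sub>m n n" using adj_mat(2)[OF Dm_carrier] by simp
  hence "(?Q * (det ?D \<cdot>\<^sub>m 1\<^sub>m n)) $$ (0, n - 1) = 0" using assms by simp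
  moreover have "?Q * (det ?D \<cdot>\<^sub>m 1\<^sub>m n) = det ?D \<cdot>\<^sub>m ?Q"
    using mult_smult_distrib[OF Qm_carrier one_carrier_mat] right_mult_one_mat[OF Qm_carrier] by simp
  moreover have "dim_row ?Q = n" "dim_col ?Q = n" by (simp_all add: Qm_def)
  ultimately show False using d assms Qm_corner[of n e r] by simp
qed

lemma invertible_det:
  assumes A: "(A :: real mat) \<in> carrier_mat n n"
  shows "invertible_mat A \<longleftrightarrow> det A \<noteq> 0"
proof
  assume "invertible_mat A"
  then obtain B where AB: "A * B = 1\<^sub>m (dim_row A)" and BA: "B * A = 1\<^sub>m (dim_row B)"
    unfolding invertible_mat_def inverts_mat_def by blast
  have "dim_col B = n" using arg_cong[OF AB, of dim_col] A by simp
  moreover have "dim_row B = n" using arg_cong[OF BA, of dim_col] A by simp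
  ultimately have B: "B \<in> carrier_mat n n" by auto
  have "det A * det B = 1" using det_mult[OF A B] AB A by simp
  thus "det A \<noteq> 0" by auto
next
  assume d: "det A \<noteq> 0"
  let ?B = "(1 / det A) \<cdot>\<^sub>m adj_mat A"
  have sm: "(1 / det A) \<cdot>\<^sub>m (det A \<cdot>\<^sub>m 1\<^sub>m n) = 1\<^sub>m n" using d by (intro eq_matI) auto
  have "A * ?B = 1\<^sub>m n"
    using sm mult_smult_distrib[OF A adj_mat(1)[OF A]] adj_mat(2)[OF A] d by simp
  moreover have "?B * A = 1\<^sub>m n"
    using sm mult_smult_assoc_mat[OF adj_mat(1)[OF A] A] adj_mat(3)[OF A] d by simp
  ultimately show "invertible_mat A" using A adj_mat(1)[OF A]
    unfolding invertible_mat_def inverts_mat_def square_mat.simps by auto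
qed

lemma mult_DD:
  assumes M: "M \<in> carrier_mat n n" and i: "i < n" and j: "j < n"
    and r: "r1 + r2 = - k" "r1 * r2 = -1"
  shows "((M * Dm e n r1) * Dm e n r2) $$ (i,j) =
    (if 1 < j then M $$ (i, j - 2) else if j = 1 then e * M $$ (i, n - 1)
     else e * (if 1 < n then M $$ (i, n - 2) else e * M $$ (i, n - 1)))
    + k * (if 0 < j then M $$ (i, j - 1) else e * M $$ (i, n - 1)) - M $$ (i,j)"
proof -
  have M1: "M * Dm e n r1 \<in> carrier_mat n n" using M by simp
  have n1: "n - 1 < n" using i by simp
  note a = mult_Dm[OF M1 i j, of e r2]
  have b: "(M * Dm e n r1) $$ (i, j) = (if 0 < j then M $$ (i, j - 1) else e * M $$ (i, n - 1)) - r1 * M $$ (i,j)"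
    by (rule mult_Dm[OF M i j])
  have r2: "r2 = - k - r1" using r by simp
  show ?thesis
  proof (cases "0 < j")
    case True
    have c: "(M * Dm e n r1) $$ (i, j - 1) = (if 0 < j - 1 then M $$ (i, j - 1 - 1) else e * M $$ (i, n - 1)) - r1 * M $$ (i,j - 1)"
      by (rule mult_Dm[OF M i]) (use j in simp)
    have h: "r1 * (k + r1) = 1" using r unfolding r2 by (simp add: algebra_simps)
    have hx: "k * (r1 * x) + r1 * (r1 * x) = x" for x
    proof - have "k * (r1 * x) + r1 * (r1 * x) = (r1 * (k + r1)) * x" by (simp add: algebra_simps)
      then show ?thesis using h by simp qed
    show ?thesis using True unfolding a b c
      by (cases "j = 1") (auto simp: r2 hx algebra_simps diff_diff_add numeral_2_eq_2)
  next
    case False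
    have c: "(M * Dm e n r1) $$ (i, n - 1) = (if 0 < n - 1 then M $$ (i, n - 1 - 1) else e * M $$ (i, n - 1)) - r1 * M $$ (i,n - 1)"
      by (rule mult_Dm[OF M i n1])
    have h: "r1 * (k + r1) = 1" using r unfolding r2 by (simp add: algebra_simps)
    have hx: "k * (r1 * x) + r1 * (r1 * x) = x" for x
    proof - have "k * (r1 * x) + r1 * (r1 * x) = (r1 * (k + r1)) * x" by (simp add: algebra_simps)
      then show ?thesis using h by simp qed
    show ?thesis using False unfolding a b c
      by (auto simp: r2 hx algebra_simps diff_diff_add numeral_2_eq_2)
  qed
qed

definition Gm :: "real \<Rightarrow> real \<Rightarrow> real \<Rightarrow> real \<Rightarrow> nat \<Rightarrow> real mat" where
  "Gm e k a b n = mat n n (\<lambda>(i, j).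
     if i \<le> j then FL k a b (j - i + 1) else e * FL k a b (n + j - i + 1))"

definition Cm :: "real \<Rightarrow> real \<Rightarrow> real \<Rightarrow> real \<Rightarrow> nat \<Rightarrow> real mat" where
  "Cm e k a b n = mat n n (\<lambda>(i, j).
     - ((if i = j then FL k a b 1 - e * FL k a b (n + 1) else 0)
        + (2 * b - e * FL k a b n) * (if j = Suc i then 1 else if i = n - 1 \<and> j = 0 then e else 0)))"

lemma Gm_carrier[simp]: "Gm e k a b n \<in> carrier_mat n n" by (simp add: Gm_def)

lemma G_le: "i \<le> j \<Longrightarrow> j < n \<Longrightarrow> Gm e k a b n $$ (i,j) = FL k a b (j - i + 1)"
  by (simp add: Gm_def)
lemma G_gt: "j < i \<Longrightarrow> i < n \<Longrightarrow> Gm e k a b n $$ (i,j) = e * FL k a b (n + j - i + 1)"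
  by (simp add: Gm_def)
lemma G_le': "i \<le> j \<Longrightarrow> j < n \<Longrightarrow> j - i + 1 = t \<Longrightarrow> Gm e k a b n $$ (i,j) = FL k a b t"
  by (simp add: Gm_def)
lemma G_gt': "j < i \<Longrightarrow> i < n \<Longrightarrow> n + j - i + 1 = t \<Longrightarrow> Gm e k a b n $$ (i,j) = e * FL k a b t"
  by (simp add: Gm_def)
lemma C_ent: "i < n \<Longrightarrow> j < n \<Longrightarrow> Cm e k a b n $$ (i,j) = 
     - ((if i = j then FL k a b 1 - e * FL k a b (n + 1) else 0)
        + (2 * b - e * FL k a b n) * (if j = Suc i then 1 else if i = n - 1 \<and> j = 0 then e else 0))"
  by (simp add: Cm_def)

lemma FL2: "FL k a b 2 = k * (b * k + a) + 2 * b"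
  by (simp add: numeral_2_eq_2)

lemma G_DD:
  assumes e: "e * e = 1" and r: "r1 + r2 = - k" "r1 * r2 = -1"
  shows "(Gm e k a b n * Dm e n r1) * Dm e n r2 = Cm e k a b n"
proof (rule eq_matI)
  fix i j assume "i < dim_row (Cm e k a b n)" "j < dim_col (Cm e k a b n)"
  hence i: "i < n" and j: "j < n" by (auto simp: Cm_def)
  let ?S = "FL k a b"
  let ?G = "Gm e k a b n"
  note DD = mult_DD[of "Gm e k a b n" n i j r1 r2 k e, OF Gm_carrier i j r]
  note C = C_ent[OF i j, of e k a b]
  show "(?G * Dm e n r1 * Dm e n r2) $$ (i, j) = Cm e k a b n $$ (i, j)"
  proof (cases "1 < j")
    case j2: True
    show ?thesis
    proof (cases "i + 2 \<le> j")
      case True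
      then obtain d where d: "j = i + d + 2" by (intro that[of "j - i - 2"]) arith
      have g1: "?G $$ (i,j) = ?S (Suc (Suc (Suc d)))" by (rule G_le') (use d j in arith)+
      have g2: "?G $$ (i,j - 1) = ?S (Suc (Suc d))" by (rule G_le') (use d j in arith)+
      have g3: "?G $$ (i,j - 2) = ?S (Suc d)" by (rule G_le') (use d j in arith)+
      show ?thesis unfolding DD C g1 g2 g3 using j2 d by simp
    next
      case F1: False
      show ?thesis
      proof (cases "i + 1 = j")
        case True
        have g1: "?G $$ (i,j) = ?S 2" by (rule G_le') (use True j in arith)+
        have g2: "?G $$ (i,j - 1) = ?S 1" by (rule G_le') (use True j in arith)+
        have g3: "?G $$ (i,j - 2) = e * ?S n" by (rule G_gt') (use True j j2 in arith)+
        show ?thesis unfolding DD C g1 g2 g3 using j2 True by (simp add: FL2)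
      next
        case F2: False
        show ?thesis
        proof (cases "i = j")
          case True
          obtain m where m: "n = Suc (Suc m)" using j j2 by (intro that[of "n - 2"]) arith
          have g1: "?G $$ (i,j) = ?S 1" by (rule G_le') (use True j in arith)+
          have g2: "?G $$ (i,j - 1) = e * ?S (Suc (Suc m))" by (rule G_gt') (use True j j2 m in arith)+
          have g3: "?G $$ (i,j - 2) = e * ?S (Suc m)" by (rule G_gt') (use True j j2 m in arith)+
          show ?thesis unfolding DD C g1 g2 g3 using j2 True m by (simp add: algebra_simps)
        next
          case False
          hence ij: "j < i" using F1 F2 by simp
          obtain d where d: "n + j - i - 1 = d" by simp
          have dd: "n + j - i + 1 = Suc (Suc d)" "n + (j - 1) - i + 1 = Suc d" "n + (j - 2) - i + 1 = d"
            using d i ij j2 by auto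
          have g1: "?G $$ (i,j) = e * ?S (Suc (Suc d))" by (rule G_gt') (use ij i dd in arith)+
          have g2: "?G $$ (i,j - 1) = e * ?S (Suc d)" by (rule G_gt') (use ij i dd in arith)+
          have g3: "?G $$ (i,j - 2) = e * ?S d" by (rule G_gt') (use ij i dd in arith)+
          show ?thesis unfolding DD C g1 g2 g3 using j2 ij i by (simp add: algebra_simps)
        qed
      qed
    qed
  next
    case jle1: False
    show ?thesis
    proof (cases "j = 1")
      case j1: True
      show ?thesis
      proof (cases "i = 0")
        case True
        have g1: "?G $$ (i,j) = ?S 2" by (rule G_le') (use True j j1 in arith)+
        have g2: "?G $$ (i,j - 1) = ?S 1" by (rule G_le') (use True j j1 in arith)+
        have g3: "?G $$ (i,n - 1) = ?S n" by (rule G_le') (use True j in arith)+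
        show ?thesis unfolding DD C g1 g2 g3 using j1 True by (simp add: FL2)
      next
        case F: False
        show ?thesis
        proof (cases "i = 1")
          case True
          obtain m where m: "n = Suc (Suc m)" using j j1 by (intro that[of "n - 2"]) arith
          have g1: "?G $$ (i,j) = ?S 1" by (rule G_le') (use True j j1 in arith)+
          have g2: "?G $$ (i,j - 1) = e * ?S (Suc (Suc m))" by (rule G_gt') (use True m j1 in arith)+
          have g3: "?G $$ (i,n - 1) = ?S (Suc m)" by (rule G_le') (use True m in arith)+
          show ?thesis unfolding DD C g1 g2 g3 using j1 True m by (simp add: algebra_simps)
        next
          case False
          obtain d where d: "n - i = d" by simp
          have i2: "2 \<le> i" using F False by simp
          have dd: "n + 1 - i + 1 = Suc (Suc d)" "n + 0 - i + 1 = Suc d" "n - 1 - i + 1 = d"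
            using d i i2 by auto
          have g1: "?G $$ (i,j) = e * ?S (Suc (Suc d))" by (rule G_gt') (use i i2 j1 dd in arith)+
          have g2: "?G $$ (i,j - 1) = e * ?S (Suc d)" by (rule G_gt') (use i i2 dd j1 in arith)+
          have g3: "?G $$ (i,n - 1) = ?S d" by (rule G_le') (use i i2 dd in arith)+
          show ?thesis unfolding DD C g1 g2 g3 using j1 i2 i by (simp add: algebra_simps)
        qed
      qed
    next
      case False
      hence j0: "j = 0" using jle1 by simp
      show ?thesis
      proof (cases "n = 1")
        case n1: True
        have i0: "i = 0" using i n1 by simp
        have g1: "?G $$ (i,j) = ?S 1" by (rule G_le') (use i0 j0 n1 in arith)+
        show ?thesis unfolding DD C using n1 i0 j0 g1 e
          by (simp add: FL2 algebra_simps)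
      next
        case n2: False
        then obtain m where m: "n = Suc (Suc m)" using i n2 by (intro that[of "n - 2"]) arith
        show ?thesis
        proof (cases "i = 0")
          case True
          have g1: "?G $$ (i,j) = ?S 1" by (rule G_le') (use True j0 m in arith)+
          have g2: "?G $$ (i,n - 1) = ?S (Suc (Suc m))" by (rule G_le') (use True m in arith)+
          have g3: "?G $$ (i,n - 2) = ?S (Suc m)" by (rule G_le') (use True m in arith)+
          show ?thesis unfolding DD C g1 g2 g3 using j0 True m by (simp add: algebra_simps)
        next
          case F: False
          show ?thesis
          proof (cases "i = n - 1")
            case True
            have g1: "?G $$ (i,j) = e * ?S 2" by (rule G_gt') (use True j0 m in arith)+
            have g2: "?G $$ (i,n - 1) = ?S 1" by (rule G_le') (use True m in arith)+
            have g3: "?G $$ (i,n - 2) = e * ?S (Suc (Suc m))" by (rule G_gt') (use True m in arith)+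
            have ee: "e * (e * x) = x" for x using e by (simp add: mult.assoc[symmetric])
            show ?thesis unfolding DD C g1 g2 g3 FL2 using j0 True m e
              by (simp add: algebra_simps ee)
          next
            case False
            obtain d where d: "n - i - 1 = d" by simp
            have dd: "n + 0 - i + 1 = Suc (Suc d)" "n - 1 - i + 1 = Suc d" "n - 2 - i + 1 = d"
              using d i F False by auto
            have g1: "?G $$ (i,j) = e * ?S (Suc (Suc d))" by (rule G_gt') (use i F j0 dd in arith)+
            have g2: "?G $$ (i,n - 1) = ?S (Suc d)" by (rule G_le') (use i dd in arith)+
            have g3: "?G $$ (i,n - 2) = ?S d" by (rule G_le') (use i F False dd in arith)+
            show ?thesis unfolding DD C g1 g2 g3 using j0 F False m by (simp add: algebra_simps)
          qed
        qed
      qed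
    qed
  qed
qed (auto simp: Cm_def Gm_def Dm_def)

lemma abs1: assumes "0 < n" "(x::real) ^ n = e" "\<bar>e\<bar> = 1" shows "x = 1 \<or> x = -1"
proof -
  have "\<bar>x\<bar> ^ n = 1 ^ n" using assms by (simp add: power_abs[symmetric])
  hence "\<bar>x\<bar> = 1" using power_eq_iff_eq_base[of n "\<bar>x\<bar>" 1] assms(1) by simp
  thus ?thesis by auto
qed

lemma det_C:
  fixes e k a b :: real and n :: nat
  assumes n: "0 < n"
  defines "c0 \<equiv> FL k a b 1 - e * FL k a b (n + 1)" and "c1 \<equiv> 2 * b - e * FL k a b n"
  shows "det (Cm e k a b n) \<noteq> 0 \<longleftrightarrow> (c1 = 0 \<and> c0 \<noteq> 0) \<or> (c1 \<noteq> 0 \<and> (- c0 / c1) ^ n \<noteq> e)"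
proof (cases "c1 = 0")
  case True
  have "Cm e k a b n = (- c0) \<cdot>\<^sub>m 1\<^sub>m n"
    using True by (intro eq_matI) (auto simp: Cm_def c0_def c1_def)
  then show ?thesis using True n by simp
next
  case False
  have "Cm e k a b n = (- c1) \<cdot>\<^sub>m Dm e n (- c0 / c1)"
  proof (rule eq_matI)
    fix i j assume "i < dim_row ((- c1) \<cdot>\<^sub>m Dm e n (- c0 / c1))" "j < dim_col ((- c1) \<cdot>\<^sub>m Dm e n (- c0 / c1))"
    hence i: "i < n" and j: "j < n" by (auto simp: Dm_def)
    have x: "Cm e k a b n $$ (i,j) = - ((if i = j then c0 else 0) + c1 * (if j = Suc i then 1 else if i = n - 1 \<and> j = 0 then e else 0))"
      using C_ent[OF i j, of e k a b] unfolding c0_def c1_def by simp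
    have y: "((- c1) \<cdot>\<^sub>m Dm e n (- c0 / c1)) $$ (i,j) = - c1 * ((if j = Suc i then 1 else if i = n - 1 \<and> j = 0 then e else 0) - (if i = j then - c0 / c1 else 0))"
      using i j by (simp add: Dm_def)
    show "Cm e k a b n $$ (i,j) = ((- c1) \<cdot>\<^sub>m Dm e n (- c0 / c1)) $$ (i,j)"
      unfolding x y using False by (cases "i = j"; cases "j = Suc i"; simp add: field_simps)
  qed (simp_all add: Cm_def Dm_def)
  hence "det (Cm e k a b n) = (- c1) ^ n * det (Dm e n (- c0 / c1))" by (simp add: Dm_def)
  then show ?thesis using False det_Dm_nz[of "- c0 / c1" n e] det_Dm_z[OF n, of "- c0 / c1" e] by auto
qed

lemma det_G:
  assumes k: "k \<noteq> 0" and n: "0 < n" and e: "\<bar>e\<bar> = 1"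
  shows "det (Gm e k a b n) \<noteq> 0 \<longleftrightarrow> det (Cm e k a b n) \<noteq> 0"
proof -
  define s where "s = sqrt (k^2 + 4)"
  have s0: "0 \<le> k^2 + 4" by simp
  have s2: "s * s = k^2 + 4" unfolding s_def real_sqrt_mult_self using s0 by simp
  define r1 where "r1 = (- k + s) / 2"
  define r2 where "r2 = (- k - s) / 2"
  have r: "r1 + r2 = - k" "r1 * r2 = -1"
    unfolding r1_def r2_def using s2 by (auto simp: field_simps power2_eq_square)
  have ee: "e * e = 1" using e by (metis abs_mult_self_eq mult_1_right)
  have nz: "det (Dm e n r) \<noteq> 0" if "r * r + k * r - 1 = 0" for r
  proof (rule det_Dm_nz, rule notI)
    assume "r ^ n = e"
    from abs1[OF n this e] have "r = 1 \<or> r = -1" .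
    thus False using that k by auto
  qed
  have kk: "k = - (r1 + r2)" "1 = - (r1 * r2)" using r by simp_all
  have "r1 * r1 + k * r1 - 1 = 0" by (subst kk(1), subst kk(2)) (simp add: algebra_simps)
  hence d1: "det (Dm e n r1) \<noteq> 0" by (rule nz)
  have "r2 * r2 + k * r2 - 1 = 0" by (subst kk(1), subst kk(2)) (simp add: algebra_simps)
  hence d2: "det (Dm e n r2) \<noteq> 0" by (rule nz)
  have "det (Cm e k a b n) = det (Gm e k a b n) * det (Dm e n r1) * det (Dm e n r2)"
    unfolding G_DD[OF ee r, symmetric]
    by (simp add: det_mult[of _ n] mult_carrier_mat[of _ n n _ n])
  thus ?thesis using d1 d2 by auto
qed

lemma odd_pow: assumes "odd n" shows "(x::real) ^ n = -1 \<longleftrightarrow> x = -1"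
proof
  assume "x ^ n = -1"
  from abs1[OF _ this] assms have "x = 1 \<or> x = -1" by (simp add: odd_pos)
  thus "x = -1" using \<open>x ^ n = -1\<close> by auto
qed (use assms in simp)

lemma even_pow: assumes "even n" "0 < n" shows "(x::real) ^ n = 1 \<longleftrightarrow> x = 1 \<or> x = -1"
proof
  assume "x ^ n = 1"
  from abs1[OF assms(2) this] show "x = 1 \<or> x = -1" by simp
qed (use assms in auto)

lemma fin_odd: assumes "odd n"
  shows "((c1 = 0 \<and> c0 \<noteq> 0) \<or> (c1 \<noteq> 0 \<and> (- c0 / c1) ^ n \<noteq> (-1::real))) \<longleftrightarrow> c0 \<noteq> c1"
  unfolding odd_pow[OF assms] by (auto simp: field_simps)

lemma fin_even: assumes "even n" "0 < n"
  shows "((c1 = 0 \<and> c0 \<noteq> 0) \<or> (c1 \<noteq> 0 \<and> (- c0 / c1) ^ n \<noteq> (1::real))) \<longleftrightarrow> c0 \<noteq> c1 \<and> c0 \<noteq> - c1"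
  unfolding even_pow[OF assms] by (auto simp: field_simps)

lemma A_eq: "skewcircA k a b n = Gm (-1) k a b n"
  by (intro eq_matI) (auto simp: skewcircA_def Gm_def)
lemma B_eq: "circB k a b n = Gm 1 k a b n"
  by (intro eq_matI) (auto simp: circB_def Gm_def)

theorem theorem2p5:
  fixes k a b :: real
  assumes "k \<noteq> 0"
  shows "(\<forall>n::nat. odd n \<longrightarrow>
            (invertible_mat (skewcircA k a b n) \<longleftrightarrow>
             FL k a b (n + 1) - FL k a b n \<noteq> - b * k + 2 * b - a))
       \<and> (\<forall>n::nat. even n \<and> n \<ge> 2 \<longrightarrow>
            (invertible_mat (circB k a b n) \<longleftrightarrow>
             FL k a b (n + 1) - FL k a b n \<noteq> b * k - 2 * b + a \<and>
             FL k a b (n + 1) + FL k a b n \<noteq> b * k + 2 * b + a))"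
proof (intro conjI allI impI)
  fix n :: nat assume n: "odd n"
  hence n0: "0 < n" by (simp add: odd_pos)
  have "invertible_mat (skewcircA k a b n) \<longleftrightarrow> det (Cm (-1) k a b n) \<noteq> 0"
    unfolding A_eq invertible_det[OF Gm_carrier] using det_G[OF assms n0, of "-1"] by simp
  also have "\<dots> \<longleftrightarrow> FL k a b (n + 1) - FL k a b n \<noteq> - b * k + 2 * b - a"
    unfolding det_C[OF n0] fin_odd[OF n] by auto
  finally show "invertible_mat (skewcircA k a b n) \<longleftrightarrow> FL k a b (n + 1) - FL k a b n \<noteq> - b * k + 2 * b - a" .
next
  fix n :: nat assume n: "even n \<and> n \<ge> 2"
  hence n0: "0 < n" by simp
  have "invertible_mat (circB k a b n) \<longleftrightarrow> det (Cm 1 k a b n) \<noteq> 0"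
    unfolding B_eq invertible_det[OF Gm_carrier] using det_G[OF assms n0, of 1] by simp
  also have "\<dots> \<longleftrightarrow> FL k a b (n + 1) - FL k a b n \<noteq> b * k - 2 * b + a \<and>
             FL k a b (n + 1) + FL k a b n \<noteq> b * k + 2 * b + a"
    unfolding det_C[OF n0] fin_even[OF conjunct1[OF n] n0] by auto
  finally show "invertible_mat (circB k a b n) \<longleftrightarrow> FL k a b (n + 1) - FL k a b n \<noteq> b * k - 2 * b + a \<and>
             FL k a b (n + 1) + FL k a b n \<noteq> b * k + 2 * b + a" .
qed

end
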